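(* Let $A$ and $B$ be nonempty closed subsets of a complete metric space $(X,\rho)$ such that both ordered pairs $(A,B)$ and $(B,A)$ have the $BUC$ property. Let $F:A\times A\to B$ and $G:B\times B\to A$ be such that there exist $\alpha,\beta\in(0,1)$ with $\alpha+\beta<1$ and $$\rho(F(x,y),G(u,v))\le\alpha\rho(x,u)+\beta\rho(y,v)+(1-(\alpha+\beta))\,\mathrm{dist}(A,B)$$ for all $(x,y)\in A\times A$ and $(u,v)\in B\times B$. Then there exist a coupled best proximity point $(x,y)$ of $F$ in $A\times A$ and a coupled best proximity point $(u,v)$ of $G$ in $B\times B$ such that $\rho(x,u)+\rho(y,v)=2\,\mathrm{dist}(A,B)$.
   Context: $\mathrm{dist}(A,B)=\inf\{\rho(a,b):a\in A,\ b\in B\}$. A point $(x,y)\in A\times A$ is a coupled best proximity point of $F:A\times A\to B$ if $\rho(x,F(x,y))=\rho(y,F(y,x))=\mathrm{dist}(A,B)$; similarly $(u,v)\in B\times B$ is a coupled best proximity point of $G:B\times B\to A$ if $\rho(u,G(u,v))=\rho(v,G(v,u))=\mathrm{dist}(A,B)$. The ordered pair $(A,B)$ has the bounded $UC$ property ($BUC$) if for all bounded sequences $\{x_n\},\{z_n\}\subset A$ and every sequence $\{y_n\}\subset B$ with $\lim_n\rho(x_n,y_n)=\lim_n\rho(z_n,y_n)=\mathrm{dist}(A,B)$ one has $\lim_n\rho(x_n,z_n)=0$; the property for $(B,A)$ is defined with the roles of $A$ and $B$ interchanged. *)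

theory Defs
  imports "HOL-Analysis.Analysis"
begin

definition BUC :: "'a::metric_space set \<Rightarrow> 'a set \<Rightarrow> bool" where
  "BUC A B \<longleftrightarrow>
    (\<forall>x z y :: nat \<Rightarrow> 'a.
       (\<forall>n. x n \<in> A) \<and> (\<forall>n. z n \<in> A) \<and> (\<forall>n. y n \<in> B) \<and>
       bounded (range x) \<and> bounded (range z) \<and>
       ((\<lambda>n. dist (x n) (y n)) \<longlonglongrightarrow> setdist A B) \<and>
       ((\<lambda>n. dist (z n) (y n)) \<longlonglongrightarrow> setdist A B)
       \<longrightarrow> ((\<lambda>n. dist (x n) (z n)) \<longlonglongrightarrow> 0))"

definition coupled_best_prox :: "'a::metric_space set \<Rightarrow> 'a set \<Rightarrow> ('a \<Rightarrow> 'a \<Rightarrow> 'a) \<Rightarrow> 'a \<Rightarrow> 'a \<Rightarrow> bool" where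
  "coupled_best_prox A B F x y \<longleftrightarrow>
     x \<in> A \<and> y \<in> A \<and> dist x (F x y) = setdist A B \<and> dist y (F y x) = setdist A B"

end

theory Submission
  imports Defs
begin

lemma BUC_unif:
  fixes A B :: "'a::metric_space set"
  assumes buc: "BUC A B" and e: "e > 0"
  shows "\<exists>\<delta>>0. \<forall>x z y. x \<in> A \<and> z \<in> A \<and> y \<in> B \<and> x \<in> cball c R \<and> z \<in> cball c R
     \<and> dist x y < setdist A B + \<delta> \<and> dist z y < setdist A B + \<delta> \<longrightarrow> dist x z < e"
proof (rule ccontr)
  assume "\<not> ?thesis"
  then have "\<forall>n. \<exists>x z y. x \<in> A \<and> z \<in> A \<and> y \<in> B \<and> x \<in> cball c R \<and> z \<in> cball c R
     \<and> dist x y < setdist A B + inverse (real (Suc n)) \<and> dist z y < setdist A B + inverse (real (Suc n))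
     \<and> e \<le> dist x z"
    by (metis inverse_positive_iff_positive of_nat_0_less_iff zero_less_Suc not_less)
  then obtain X Z Y where H: "\<And>n. X n \<in> A \<and> Z n \<in> A \<and> Y n \<in> B \<and> X n \<in> cball c R \<and> Z n \<in> cball c R
     \<and> dist (X n) (Y n) < setdist A B + inverse (real (Suc n)) \<and> dist (Z n) (Y n) < setdist A B + inverse (real (Suc n))
     \<and> e \<le> dist (X n) (Z n)"
    by metis
  have up: "(\<lambda>n. setdist A B + inverse (real (Suc n))) \<longlonglongrightarrow> setdist A B"
    using tendsto_add[OF tendsto_const LIMSEQ_inverse_real_of_nat, of "setdist A B"] by simp
  have l1: "(\<lambda>n. dist (X n) (Y n)) \<longlonglongrightarrow> setdist A B"
  proof (rule tendsto_sandwich[OF _ _ tendsto_const up])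
    show "\<forall>\<^sub>F n in sequentially. setdist A B \<le> dist (X n) (Y n)"
      using H setdist_le_dist by (intro always_eventually) blast
    show "\<forall>\<^sub>F n in sequentially. dist (X n) (Y n) \<le> setdist A B + inverse (real (Suc n))"
      using H by (intro always_eventually allI less_imp_le) blast
  qed
  have l2: "(\<lambda>n. dist (Z n) (Y n)) \<longlonglongrightarrow> setdist A B"
  proof (rule tendsto_sandwich[OF _ _ tendsto_const up])
    show "\<forall>\<^sub>F n in sequentially. setdist A B \<le> dist (Z n) (Y n)"
      using H setdist_le_dist by (intro always_eventually) blast
    show "\<forall>\<^sub>F n in sequentially. dist (Z n) (Y n) \<le> setdist A B + inverse (real (Suc n))"
      using H by (intro always_eventually allI less_imp_le) blast
  qed
  have bX: "bounded (range X)" by (rule bounded_subset[OF bounded_cball[of c R]]) (use H in auto)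
  have bZ: "bounded (range Z)" by (rule bounded_subset[OF bounded_cball[of c R]]) (use H in auto)
  have "(\<lambda>n. dist (X n) (Z n)) \<longlonglongrightarrow> 0"
    using buc l1 l2 bX bZ H unfolding BUC_def by blast
  then have "e \<le> 0" by (rule LIMSEQ_le_const) (use H in auto)
  with e show False by simp
qed

theorem theorem35:
  fixes A B :: "'a::complete_space set"
    and F G :: "'a \<Rightarrow> 'a \<Rightarrow> 'a"
    and \<alpha> \<beta> :: real
  assumes "A \<noteq> {}" "B \<noteq> {}" "closed A" "closed B"
    and "BUC A B" "BUC B A"
    and "\<And>x y. x \<in> A \<Longrightarrow> y \<in> A \<Longrightarrow> F x y \<in> B"
    and "\<And>u v. u \<in> B \<Longrightarrow> v \<in> B \<Longrightarrow> G u v \<in> A"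
    and "0 < \<alpha>" "\<alpha> < 1" "0 < \<beta>" "\<beta> < 1" "\<alpha> + \<beta> < 1"
    and "\<And>x y u v. x \<in> A \<Longrightarrow> y \<in> A \<Longrightarrow> u \<in> B \<Longrightarrow> v \<in> B \<Longrightarrow>
           dist (F x y) (G u v) \<le> \<alpha> * dist x u + \<beta> * dist y v + (1 - (\<alpha> + \<beta>)) * setdist A B"
  shows "\<exists>x y u v. coupled_best_prox A B F x y \<and> coupled_best_prox B A G u v \<and>
           dist x u + dist y v = 2 * setdist A B"
proof -
  define d where "d = setdist A B"
  define k where "k = \<alpha> + \<beta>"
  define f where "f z = F z z" for z
  define g where "g w = G w w" for w
  have k0: "0 \<le> k" "k < 1" using assms(9,11,13) by (auto simp: k_def)
  have fB: "\<And>x. x \<in> A \<Longrightarrow> f x \<in> B" using assms(7) f_def by auto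
  have gA: "\<And>w. w \<in> B \<Longrightarrow> g w \<in> A" using assms(8) g_def by auto
  have dle: "\<And>x w. x \<in> A \<Longrightarrow> w \<in> B \<Longrightarrow> d \<le> dist x w"
    unfolding d_def by (rule setdist_le_dist)
  have key: "\<And>x w. x \<in> A \<Longrightarrow> w \<in> B \<Longrightarrow> dist (f x) (g w) \<le> d + k * (dist x w - d)"
  proof -
    fix x w assume "x \<in> A" "w \<in> B"
    from assms(14)[OF this(1) this(1) this(2) this(2)]
    show "dist (f x) (g w) \<le> d + k * (dist x w - d)"
      unfolding f_def g_def d_def k_def by (simp add: algebra_simps)
  qed
  obtain a where a: "a \<in> A" using assms(1) by auto
  define z where "z n = ((\<lambda>t. g (f t)) ^^ n) a" for n
  have zS: "z (Suc n) = g (f (z n))" for n by (simp add: z_def)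
  have z0: "z 0 = a" by (simp add: z_def)
  have zA: "z n \<in> A" for n by (induction n) (auto simp: zS z0 a fB gA)
  define E where "E m = dist (z m) (f a) - d" for m
  have claim: "dist (z (n+m)) (f (z n)) - d \<le> k^(2*n) * E m" for n m
  proof (induction n)
    case 0 then show ?case by (simp add: E_def z0)
  next
    case (Suc n)
    have "dist (z (Suc n + m)) (f (z (Suc n))) = dist (f (z (Suc n))) (g (f (z (n+m))))"
      by (simp add: zS dist_commute)
    also have "\<dots> \<le> d + k * (dist (z (Suc n)) (f (z (n+m))) - d)"
      by (rule key) (auto simp: zA fB)
    finally have 1: "dist (z (Suc n + m)) (f (z (Suc n))) - d \<le> k * (dist (z (Suc n)) (f (z (n+m))) - d)"
      by simp
    have "dist (z (Suc n)) (f (z (n+m))) = dist (f (z (n+m))) (g (f (z n)))"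
      by (simp add: zS dist_commute)
    also have "\<dots> \<le> d + k * (dist (z (n+m)) (f (z n)) - d)"
      by (rule key) (auto simp: zA fB)
    finally have 2: "dist (z (Suc n)) (f (z (n+m))) - d \<le> k * (k^(2*n) * E m)"
      using Suc.IH mult_left_mono[OF Suc.IH k0(1)] by linarith
    have "k * (dist (z (Suc n)) (f (z (n+m))) - d) \<le> k * (k * (k^(2*n) * E m))"
      using mult_left_mono[OF 2 k0(1)] .
    also have "\<dots> = k^(2 * Suc n) * E m" by (simp add: power_add)
    finally show ?case using 1 by linarith
  qed
  have E0: "0 \<le> E m" for m unfolding E_def using dle[OF zA fB[OF a]] by simp
  define C where "C = E 0 + 2 * d + dist (z 1) (f a)"
  define M where "M = C / (1 - k)"
  have EM: "E m \<le> M" for m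
  proof -
    have t: "dist (z m) (f a) \<le> dist (z m) (f (z m)) + dist (f (z m)) (z 1) + dist (z 1) (f a)"
    proof -
      have "dist (z m) (f a) \<le> dist (z m) (f (z m)) + dist (f (z m)) (f a)" by (rule dist_triangle)
      moreover have "dist (f (z m)) (f a) \<le> dist (f (z m)) (z 1) + dist (z 1) (f a)" by (rule dist_triangle)
      ultimately show ?thesis by linarith
    qed
    have c1: "dist (z m) (f (z m)) - d \<le> E 0"
    proof -
      have "dist (z (m+0)) (f (z m)) - d \<le> k^(2*m) * E 0" by (rule claim)
      also have "\<dots> \<le> 1 * E 0"
        by (rule mult_right_mono[OF power_le_one[OF k0(1)] E0]) (use k0 in simp)
      finally show ?thesis by simp
    qed
    have "dist (f (z m)) (z 1) = dist (f (z m)) (g (f a))" by (simp add: zS z0)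
    also have "\<dots> \<le> d + k * (dist (z m) (f a) - d)" by (rule key) (auto simp: zA fB a)
    finally have c2: "dist (f (z m)) (z 1) \<le> d + k * E m" by (simp add: E_def)
    have "0 \<le> d" unfolding d_def by (rule setdist_pos_le)
    then have "E m \<le> C + k * E m" using t c1 c2 unfolding C_def E_def by linarith
    then have "(1 - k) * E m \<le> C" by (simp add: algebra_simps)
    then show ?thesis unfolding M_def using k0 by (simp add: field_simps)
  qed
  have bound: "dist (z (n+m)) (f (z n)) - d \<le> k^(2*n) * M" for n m
    using claim[of n m] mult_left_mono[OF EM[of m] zero_le_power[OF k0(1), of "2*n"]] by linarith
  have M0: "0 \<le> M" using E0[of 0] EM[of 0] by linarith
  have zball: "z m \<in> cball (f a) (d + M)" for m
    using EM[of m] unfolding E_def by (simp add: dist_commute)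
  have pw: "(\<lambda>n. k^(2*n) * M) \<longlonglongrightarrow> 0"
  proof -
    have "(\<lambda>n. (k^2)^n * M) \<longlonglongrightarrow> 0 * M"
      by (rule tendsto_mult[OF LIMSEQ_power_zero tendsto_const]) (use k0 in \<open>simp add: abs_if power_less_one_iff\<close>)
    then show ?thesis by (simp add: power_mult)
  qed
  have cau: "Cauchy z"
  proof (unfold Cauchy_def, intro allI impI)
    fix e :: real assume e: "e > 0"
    from BUC_unif[OF assms(5) e, of "f a" "d + M"] obtain \<delta> where
      \<delta>: "\<delta> > 0" and U: "\<And>x z y. x \<in> A \<Longrightarrow> z \<in> A \<Longrightarrow> y \<in> B \<Longrightarrow> x \<in> cball (f a) (d+M) \<Longrightarrow> z \<in> cball (f a) (d+M)
     \<Longrightarrow> dist x y < d + \<delta> \<Longrightarrow> dist z y < d + \<delta> \<Longrightarrow> dist x z < e"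
      unfolding d_def by blast
    from order_tendstoD(2)[OF pw \<delta>] obtain N where N: "\<And>n. n \<ge> N \<Longrightarrow> k^(2*n) * M < \<delta>"
      by (auto simp: eventually_sequentially)
    have main: "dist (z (n+j)) (z n) < e" if "n \<ge> N" for n j
    proof -
      have "dist (z (n+j)) (f (z n)) < d + \<delta>" using bound[of n j] N[OF that] by linarith
      moreover have "dist (z (n+0)) (f (z n)) < d + \<delta>" using bound[of n 0] N[OF that] by linarith
      ultimately show ?thesis using U[OF zA zA fB[OF zA] zball zball] by simp
    qed
    show "\<exists>M. \<forall>m\<ge>M. \<forall>n\<ge>M. dist (z m) (z n) < e"
    proof (intro exI allI impI)
      fix m n assume "m \<ge> N" "n \<ge> N"
      show "dist (z m) (z n) < e"
      proof (cases "n \<le> m")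
        case True
        then show ?thesis using main[OF \<open>n \<ge> N\<close>, of "m - n"] by simp
      next
        case False
        then show ?thesis using main[OF \<open>m \<ge> N\<close>, of "n - m"] by (simp add: dist_commute)
      qed
    qed
  qed
  then obtain x where lim: "z \<longlonglongrightarrow> x" using Cauchy_convergent_iff convergent_def by blast
  have xA: "x \<in> A" by (rule closed_sequentially[OF assms(3) zA lim])
  have fxB: "f x \<in> B" using fB[OF xA] .
  have up: "dist x (f x) \<le> d"
  proof -
    define R where "R n = k * (dist x (z n) + d + k^(2*n) * M) + (1 - k) * d + dist x (z (Suc n))" for n
    have "R \<longlonglongrightarrow> k * (0 + d + 0) + (1 - k) * d + 0"
      unfolding R_def
      by (intro tendsto_intros pw tendsto_dist_iff[THEN iffD1] LIMSEQ_Suc lim)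
        (use tendsto_dist[OF tendsto_const lim, of x] LIMSEQ_Suc[OF tendsto_dist[OF tendsto_const lim, of x]] in auto)
    then have RL: "R \<longlonglongrightarrow> d" by (simp add: algebra_simps)
    have "dist x (f x) \<le> R n" for n
    proof -
      have "dist (z (Suc n)) (f x) = dist (f x) (g (f (z n)))" by (simp add: zS dist_commute)
      also have "\<dots> \<le> d + k * (dist x (f (z n)) - d)" by (rule key) (auto simp: xA zA fB)
      finally have a1: "dist (z (Suc n)) (f x) \<le> d + k * (dist x (f (z n)) - d)" .
      have "dist x (f (z n)) \<le> dist x (z n) + dist (z n) (f (z n))" by (rule dist_triangle)
      also have "\<dots> \<le> dist x (z n) + d + k^(2*n) * M" using bound[of n 0] by simp
      finally have a2: "k * dist x (f (z n)) \<le> k * (dist x (z n) + d + k^(2*n) * M)"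
        using k0 by (simp add: mult_left_mono)
      have "dist x (f x) \<le> dist x (z (Suc n)) + dist (z (Suc n)) (f x)" by (rule dist_triangle)
      then show ?thesis using a1 a2 unfolding R_def by (simp add: algebra_simps)
    qed
    then show ?thesis by (intro LIMSEQ_le_const[OF RL]) auto
  qed
  have ex: "dist x (f x) = d" using up dle[OF xA fxB] by simp
  have gfx: "dist (f x) (g (f x)) = d"
  proof -
    have "dist (f x) (g (f x)) \<le> d + k * (dist x (f x) - d)" by (rule key[OF xA fxB])
    then have "dist (f x) (g (f x)) \<le> d" using ex by simp
    moreover have "d \<le> dist (g (f x)) (f x)" using dle[OF gA[OF fxB] fxB] .
    ultimately show ?thesis by (simp add: dist_commute)
  qed
  have sym: "setdist B A = d" by (simp add: d_def setdist_sym)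
  show ?thesis
  proof (intro exI conjI)
    show "coupled_best_prox A B F x x"
      unfolding coupled_best_prox_def using xA ex by (simp add: f_def d_def)
    show "coupled_best_prox B A G (f x) (f x)"
      unfolding coupled_best_prox_def using fxB gfx sym by (simp add: g_def)
    show "dist x (f x) + dist x (f x) = 2 * setdist A B" using ex by (simp add: d_def)
  qed
qed

end
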